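(* Let $n=n_1+n_2+n_3=p+q$ with positive integers, let $G=U(n)$, let $L=U(n_1)\times U(n_2)\times U(n_3)$ and $H=U(p)\times U(q)$ be the natural block-diagonal subgroups of $G$, and let $G'=O(n)$. If $\min(p,q)\ge 3$ and $\min(n_1,n_2,n_3)\ge 2$, then $LG'H\subsetneq G$.
   Context: $LG'H=\{xyz:x\in L,y\in G',z\in H\}$. *)

theory Defs
  imports "Jordan_Normal_Form.Schur_Decomposition"
begin

definition unitary_group :: "nat \<Rightarrow> complex mat set" where
  "unitary_group n = {U \<in> carrier_mat n n. U * mat_adjoint U = 1\<^sub>m n}"

definition orthogonal_group_in_U :: "nat \<Rightarrow> complex mat set" where
  "orthogonal_group_in_U n =
     {map_mat complex_of_real Q | Q. Q \<in> carrier_mat n n \<and> Q * transpose_mat Q = 1\<^sub>m n}"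

definition block_U2 :: "nat \<Rightarrow> nat \<Rightarrow> complex mat set" where
  "block_U2 p q =
     {four_block_mat A (0\<^sub>m p q) (0\<^sub>m q p) B | A B. A \<in> unitary_group p \<and> B \<in> unitary_group q}"

definition block_U3 :: "nat \<Rightarrow> nat \<Rightarrow> nat \<Rightarrow> complex mat set" where
  "block_U3 n1 n2 n3 =
     {four_block_mat (four_block_mat A (0\<^sub>m n1 n2) (0\<^sub>m n2 n1) B)
                     (0\<^sub>m (n1 + n2) n3) (0\<^sub>m n3 (n1 + n2)) C
      | A B C. A \<in> unitary_group n1 \<and> B \<in> unitary_group n2 \<and> C \<in> unitary_group n3}"

end

theory Submission
  imports Defs
begin

lemma adj_dim[simp]: "dim_row (mat_adjoint A) = dim_col A" "dim_col (mat_adjoint A) = dim_row A"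
  unfolding mat_adjoint_def by auto

lemma adj_index[simp]: "i < dim_col A \<Longrightarrow> j < dim_row A \<Longrightarrow> mat_adjoint A $$ (i,j) = cnj (A $$ (j,i))"
  unfolding mat_adjoint_def by (simp add: mat_of_rows_def)

lemma adj_carrier[simp]: "A \<in> carrier_mat n m \<Longrightarrow> mat_adjoint A \<in> carrier_mat m n"
  unfolding carrier_mat_def by simp

lemma mi: assumes "A \<in> carrier_mat n m" "B \<in> carrier_mat m k" "i < n" "j < k"
  shows "(A * B) $$ (i,j) = (\<Sum>l<m. A $$ (i,l) * B $$ (l,j))"
proof -
  have "(A*B) $$ (i,j) = row A i \<bullet> col B j" using assms by simp
  also have "\<dots> = (\<Sum>l\<in>{0..<m}. row A i $ l * col B j $ l)" unfolding scalar_prod_def using assms by simp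
  also have "\<dots> = (\<Sum>l<m. A $$ (i,l) * B $$ (l,j))" unfolding lessThan_atLeast0
    by (rule sum.cong) (use assms in auto)
  finally show ?thesis .
qed

lemma adj_mult: fixes A B :: "complex mat" assumes "A \<in> carrier_mat n m" "B \<in> carrier_mat m k"
  shows "mat_adjoint (A*B) = mat_adjoint B * mat_adjoint A"
proof (rule eq_matI)
  fix i j assume ij: "i < dim_row (mat_adjoint B * mat_adjoint A)" "j < dim_col (mat_adjoint B * mat_adjoint A)"
  hence i: "i < k" and j: "j < n" using assms by auto
  have "mat_adjoint (A*B) $$ (i,j) = cnj ((A*B) $$ (j,i))"
    by (rule adj_index) (use assms i j in auto)
  also have "(A*B) $$ (j,i) = (\<Sum>l<m. A$$(j,l) * B$$(l,i))" by (rule mi[OF assms j i])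
  also have "cnj (\<Sum>l<m. A$$(j,l) * B$$(l,i)) = (\<Sum>l<m. mat_adjoint B $$ (i,l) * mat_adjoint A $$ (l,j))"
    unfolding cnj_sum
  proof (rule sum.cong)
    fix l assume "l \<in> {..<m}"
    hence l: "l < m" by simp
    have "mat_adjoint B $$ (i,l) = cnj (B $$ (l,i))" by (rule adj_index) (use assms i l in auto)
    moreover have "mat_adjoint A $$ (l,j) = cnj (A $$ (j,l))" by (rule adj_index) (use assms j l in auto)
    ultimately show "cnj (A$$(j,l) * B$$(l,i)) = mat_adjoint B $$ (i,l) * mat_adjoint A $$ (l,j)"
      by (simp add: mult.commute)
  qed simp
  also have "\<dots> = (mat_adjoint B * mat_adjoint A) $$ (i,j)"
    by (subst mi[of "mat_adjoint B" k m "mat_adjoint A" n i j]) (use assms i j in auto)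
  finally show "mat_adjoint (A*B) $$ (i,j) = (mat_adjoint B * mat_adjoint A) $$ (i,j)" .
qed (use assms in auto)

lemma unitary_mult: assumes "A \<in> unitary_group n" "B \<in> unitary_group n"
  shows "A * B \<in> unitary_group n"
proof -
  have A: "A \<in> carrier_mat n n" "A * mat_adjoint A = 1\<^sub>m n" and B: "B \<in> carrier_mat n n" "B * mat_adjoint B = 1\<^sub>m n"
    using assms unfolding unitary_group_def by simp_all
  have "A * B * mat_adjoint (A*B) = A * B * (mat_adjoint B * mat_adjoint A)"
    using adj_mult[OF A(1) B(1)] by simp
  also have "\<dots> = A * (B * (mat_adjoint B * mat_adjoint A))"
    by (rule assoc_mult_mat[of A n n B n "mat_adjoint B * mat_adjoint A" n]) (use A B in auto)
  also have "B * (mat_adjoint B * mat_adjoint A) = (B * mat_adjoint B) * mat_adjoint A"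
    by (rule assoc_mult_mat[symmetric, of B n n "mat_adjoint B" n "mat_adjoint A" n]) (use A B in auto)
  also have "(B * mat_adjoint B) * mat_adjoint A = mat_adjoint A"
    unfolding B(2) by (rule left_mult_one_mat) (use A in auto)
  also have "A * mat_adjoint A = 1\<^sub>m n" by (rule A(2))
  finally have "A * B * mat_adjoint (A*B) = 1\<^sub>m n" .
  moreover have "A * B \<in> carrier_mat n n" using A B by auto
  ultimately show ?thesis unfolding unitary_group_def by auto
qed

lemma blk_idx: fixes P R :: "complex mat"
  assumes "P \<in> carrier_mat a a" "R \<in> carrier_mat b b" "i < a+b" "j < a+b"
  shows "four_block_mat P (0\<^sub>m a b) (0\<^sub>m b a) R $$ (i,j) =
    (if i < a then (if j < a then P $$ (i,j) else 0) else (if j < a then 0 else R $$ (i-a, j-a)))"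
  using assms by (subst index_mat_four_block) auto

lemma adj_four: fixes A B :: "complex mat" assumes "A \<in> carrier_mat a a" "B \<in> carrier_mat b b"
  shows "mat_adjoint (four_block_mat A (0\<^sub>m a b) (0\<^sub>m b a) B)
    = four_block_mat (mat_adjoint A) (0\<^sub>m a b) (0\<^sub>m b a) (mat_adjoint B)"
proof (rule eq_matI)
  have F: "four_block_mat A (0\<^sub>m a b) (0\<^sub>m b a) B \<in> carrier_mat (a+b) (a+b)" using assms by simp
  fix i j assume "i < dim_row (four_block_mat (mat_adjoint A) (0\<^sub>m a b) (0\<^sub>m b a) (mat_adjoint B))"
    "j < dim_col (four_block_mat (mat_adjoint A) (0\<^sub>m a b) (0\<^sub>m b a) (mat_adjoint B))"
  hence ij: "i < a+b" "j < a+b" using assms by auto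
  have "mat_adjoint (four_block_mat A (0\<^sub>m a b) (0\<^sub>m b a) B) $$ (i,j) = cnj (four_block_mat A (0\<^sub>m a b) (0\<^sub>m b a) B $$ (j,i))"
    by (rule adj_index) (use F ij in auto)
  also have "\<dots> = four_block_mat (mat_adjoint A) (0\<^sub>m a b) (0\<^sub>m b a) (mat_adjoint B) $$ (i,j)"
    unfolding blk_idx[OF assms ij(2,1)] blk_idx[OF adj_carrier[OF assms(1)] adj_carrier[OF assms(2)] ij]
    using assms ij by auto
  finally show "mat_adjoint (four_block_mat A (0\<^sub>m a b) (0\<^sub>m b a) B) $$ (i,j) =
    four_block_mat (mat_adjoint A) (0\<^sub>m a b) (0\<^sub>m b a) (mat_adjoint B) $$ (i,j)" .
qed (use assms in auto)

lemma unitary_four: assumes "A \<in> unitary_group a" "B \<in> unitary_group b"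
  shows "four_block_mat A (0\<^sub>m a b) (0\<^sub>m b a) B \<in> unitary_group (a+b)"
proof -
  have A: "A \<in> carrier_mat a a" "A * mat_adjoint A = 1\<^sub>m a" and B: "B \<in> carrier_mat b b" "B * mat_adjoint B = 1\<^sub>m b"
    using assms unfolding unitary_group_def by auto
  have A': "mat_adjoint A \<in> carrier_mat a a" and B': "mat_adjoint B \<in> carrier_mat b b" using A B by auto
  have "four_block_mat A (0\<^sub>m a b) (0\<^sub>m b a) B * mat_adjoint (four_block_mat A (0\<^sub>m a b) (0\<^sub>m b a) B)
     = four_block_mat A (0\<^sub>m a b) (0\<^sub>m b a) B * four_block_mat (mat_adjoint A) (0\<^sub>m a b) (0\<^sub>m b a) (mat_adjoint B)"
    using adj_four[OF A(1) B(1)] by simp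
  also have "\<dots> = four_block_mat (A * mat_adjoint A + 0\<^sub>m a b * 0\<^sub>m b a) (A * 0\<^sub>m a b + 0\<^sub>m a b * mat_adjoint B)
      (0\<^sub>m b a * mat_adjoint A + B * 0\<^sub>m b a) (0\<^sub>m b a * 0\<^sub>m a b + B * mat_adjoint B)"
    by (rule mult_four_block_mat[OF A(1) zero_carrier_mat zero_carrier_mat B(1) A' zero_carrier_mat zero_carrier_mat B'])
  also have "A * mat_adjoint A + 0\<^sub>m a b * 0\<^sub>m b a = 1\<^sub>m a" using A by simp
  also have "A * 0\<^sub>m a b + 0\<^sub>m a b * mat_adjoint B = 0\<^sub>m a b"
    using right_mult_zero_mat[OF A(1), of b] left_mult_zero_mat[OF B', of a] by simp
  also have "0\<^sub>m b a * mat_adjoint A + B * 0\<^sub>m b a = 0\<^sub>m b a"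
    using right_mult_zero_mat[OF B(1), of a] left_mult_zero_mat[OF A', of b] by simp
  also have "0\<^sub>m b a * 0\<^sub>m a b + B * mat_adjoint B = 1\<^sub>m b" using B by simp
  also have "four_block_mat (1\<^sub>m a) (0\<^sub>m a b) (0\<^sub>m b a) (1\<^sub>m b) = 1\<^sub>m (a+b)" by simp
  finally show ?thesis using A B unfolding unitary_group_def by auto
qed

lemma orth_unitary: assumes "Y \<in> orthogonal_group_in_U n" shows "Y \<in> unitary_group n"
proof -
  obtain Q where Q: "Y = map_mat complex_of_real Q" "Q \<in> carrier_mat n n" "Q * transpose_mat Q = 1\<^sub>m n"
    using assms unfolding orthogonal_group_in_U_def by auto
  have adj: "mat_adjoint Y = map_mat complex_of_real (transpose_mat Q)"
    apply (rule eq_matI) using Q by auto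
  have "Y * mat_adjoint Y = map_mat complex_of_real Q * map_mat complex_of_real (transpose_mat Q)"
    unfolding adj unfolding Q(1) ..
  also have "\<dots> = map_mat complex_of_real (Q * transpose_mat Q)"
    by (rule of_real_hom.mat_hom_mult[symmetric]) (use Q(2) in auto)
  also have "\<dots> = 1\<^sub>m n" using Q(3) of_real_hom.mat_hom_one by simp
  finally show ?thesis using Q unfolding unitary_group_def by auto
qed

lemma bu3_unitary: "X \<in> block_U3 n1 n2 n3 \<Longrightarrow> X \<in> unitary_group (n1+n2+n3)"
  unfolding block_U3_def by (auto intro!: unitary_four)

lemma bu2_unitary: "X \<in> block_U2 p q \<Longrightarrow> X \<in> unitary_group (p+q)"
  unfolding block_U2_def by (auto intro!: unitary_four)

definition lab3 :: "nat \<Rightarrow> nat \<Rightarrow> nat \<Rightarrow> nat" where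
  "lab3 n1 n2 i = (if i < n1 then 0 else if i < n1+n2 then 1 else 2)"
definition lab2 :: "nat \<Rightarrow> nat \<Rightarrow> nat" where
  "lab2 p i = (if i < p then 0 else 1)"

lemma bu2_zero: assumes "Z \<in> block_U2 p q" "i < p+q" "j < p+q" "lab2 p i \<noteq> lab2 p j"
  shows "Z $$ (i,j) = 0"
proof -
  obtain A B where Z: "Z = four_block_mat A (0\<^sub>m p q) (0\<^sub>m q p) B" "A \<in> carrier_mat p p" "B \<in> carrier_mat q q"
    using assms(1) unfolding block_U2_def unitary_group_def by auto
  show ?thesis unfolding Z(1) blk_idx[OF Z(2,3) assms(2,3)] using assms(4) unfolding lab2_def by auto
qed

lemma bu3_zero: assumes "X \<in> block_U3 n1 n2 n3" "i < n1+n2+n3" "j < n1+n2+n3" "lab3 n1 n2 i \<noteq> lab3 n1 n2 j"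
  shows "X $$ (i,j) = 0"
proof -
  obtain A B C where X: "X = four_block_mat (four_block_mat A (0\<^sub>m n1 n2) (0\<^sub>m n2 n1) B) (0\<^sub>m (n1+n2) n3) (0\<^sub>m n3 (n1+n2)) C"
    "A \<in> carrier_mat n1 n1" "B \<in> carrier_mat n2 n2" "C \<in> carrier_mat n3 n3"
    using assms(1) unfolding block_U3_def unitary_group_def by auto
  have AB: "four_block_mat A (0\<^sub>m n1 n2) (0\<^sub>m n2 n1) B \<in> carrier_mat (n1+n2) (n1+n2)" using X by auto
  show ?thesis
  proof (cases "i < n1+n2 \<and> j < n1+n2")
    case True
    then show ?thesis unfolding X(1) blk_idx[OF AB X(4) assms(2,3)] blk_idx[OF X(2,3) True[THEN conjunct1] True[THEN conjunct2]]
      using assms(4) unfolding lab3_def by auto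
  next
    case False
    then show ?thesis unfolding X(1) blk_idx[OF AB X(4) assms(2,3)] using assms(4) unfolding lab3_def by auto
  qed
qed

definition MK :: "nat \<Rightarrow> nat \<Rightarrow> complex" where
  "MK s t = [[- \<i>, \<i>, 0, 1, -1, \<i>], [\<i>, \<i>, 1, - \<i>, 0, -1], [0, -1, -1, - \<i>, 1, \<i>], [1, 1, \<i>, 1, 1, 0], [\<i>, 0, - \<i>, 1, - \<i>, 1], [\<i>, - \<i>, \<i>, 0, -1, \<i>]] ! s ! t"

lemma sum6: "(\<Sum>t<6. f t) = f 0 + f 1 + f 2 + f 3 + f 4 + f (5::nat)"
  by (simp add: eval_nat_numeral)

lemma MK_vals:
  "MK 0 0 = - \<i>"
  "MK 0 (Suc 0) = \<i>"
  "MK 0 2 = 0"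
  "MK 0 3 = 1"
  "MK 0 4 = -1"
  "MK 0 5 = \<i>"
  "MK (Suc 0) 0 = \<i>"
  "MK (Suc 0) (Suc 0) = \<i>"
  "MK (Suc 0) 2 = 1"
  "MK (Suc 0) 3 = - \<i>"
  "MK (Suc 0) 4 = 0"
  "MK (Suc 0) 5 = -1"
  "MK 2 0 = 0"
  "MK 2 (Suc 0) = -1"
  "MK 2 2 = -1"
  "MK 2 3 = - \<i>"
  "MK 2 4 = 1"
  "MK 2 5 = \<i>"
  "MK 3 0 = 1"
  "MK 3 (Suc 0) = 1"
  "MK 3 2 = \<i>"
  "MK 3 3 = 1"
  "MK 3 4 = 1"
  "MK 3 5 = 0"
  "MK 4 0 = \<i>"
  "MK 4 (Suc 0) = 0"
  "MK 4 2 = - \<i>"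
  "MK 4 3 = 1"
  "MK 4 4 = - \<i>"
  "MK 4 5 = 1"
  "MK 5 0 = \<i>"
  "MK 5 (Suc 0) = - \<i>"
  "MK 5 2 = \<i>"
  "MK 5 3 = 0"
  "MK 5 4 = -1"
  "MK 5 5 = \<i>"
  by (simp_all add: MK_def eval_nat_numeral)

lemma local_core:
  fixes u :: "nat \<Rightarrow> nat \<Rightarrow> complex"
  assumes sym: "\<And>t t'. u t t' = u t' t" and zero: "\<And>t t'. t < 3 \<Longrightarrow> 3 \<le> t' \<Longrightarrow> u t t' = 0"
    and eq: "\<And>s s'. s < 6 \<Longrightarrow> s' < 6 \<Longrightarrow> s div 2 \<noteq> s' div 2 \<Longrightarrow> (\<Sum>t'<6. MK s' t' * (\<Sum>t<6. MK s t * u t t')) = 0"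
  shows "u 0 0 = 0 \<and> u 0 1 = 0 \<and> u 0 2 = 0"
proof -
  have s10: "u (Suc 0) 0 = u 0 (Suc 0)" by (rule sym)
  have s20: "u 2 0 = u 0 2" by (rule sym)
  have s21: "u 2 (Suc 0) = u (Suc 0) 2" by (rule sym)
  have s43: "u 4 3 = u 3 4" by (rule sym)
  have s53: "u 5 3 = u 3 5" by (rule sym)
  have s54: "u 5 4 = u 4 5" by (rule sym)
  have z03: "u 0 3 = 0" by (rule zero) auto
  have z30: "u 3 0 = 0" using zero[of 0 3] sym[of 3 0] by simp
  have z04: "u 0 4 = 0" by (rule zero) auto
  have z40: "u 4 0 = 0" using zero[of 0 4] sym[of 4 0] by simp
  have z05: "u 0 5 = 0" by (rule zero) auto
  have z50: "u 5 0 = 0" using zero[of 0 5] sym[of 5 0] by simp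
  have z13: "u (Suc 0) 3 = 0" by (rule zero) auto
  have z31: "u 3 (Suc 0) = 0" using zero[of 1 3] sym[of 3 1] by simp
  have z14: "u (Suc 0) 4 = 0" by (rule zero) auto
  have z41: "u 4 (Suc 0) = 0" using zero[of 1 4] sym[of 4 1] by simp
  have z15: "u (Suc 0) 5 = 0" by (rule zero) auto
  have z51: "u 5 (Suc 0) = 0" using zero[of 1 5] sym[of 5 1] by simp
  have z23: "u 2 3 = 0" by (rule zero) auto
  have z32: "u 3 2 = 0" using zero[of 2 3] sym[of 3 2] by simp
  have z24: "u 2 4 = 0" by (rule zero) auto
  have z42: "u 4 2 = 0" using zero[of 2 4] sym[of 4 2] by simp
  have z25: "u 2 5 = 0" by (rule zero) auto
  have z52: "u 5 2 = 0" using zero[of 2 5] sym[of 5 2] by simp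
  have e0: "(\<Sum>t'<6. MK 2 t' * (\<Sum>t<6. MK 0 t * u t t')) = 0" by (rule eq) auto
  have e1: "(\<Sum>t'<6. MK 3 t' * (\<Sum>t<6. MK 0 t * u t t')) = 0" by (rule eq) auto
  have e2: "(\<Sum>t'<6. MK 4 t' * (\<Sum>t<6. MK 0 t * u t t')) = 0" by (rule eq) auto
  have e3: "(\<Sum>t'<6. MK 5 t' * (\<Sum>t<6. MK 0 t * u t t')) = 0" by (rule eq) auto
  have e4: "(\<Sum>t'<6. MK 2 t' * (\<Sum>t<6. MK 1 t * u t t')) = 0" by (rule eq) auto
  have e5: "(\<Sum>t'<6. MK 3 t' * (\<Sum>t<6. MK 1 t * u t t')) = 0" by (rule eq) auto
  have e6: "(\<Sum>t'<6. MK 4 t' * (\<Sum>t<6. MK 1 t * u t t')) = 0" by (rule eq) auto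
  have e7: "(\<Sum>t'<6. MK 5 t' * (\<Sum>t<6. MK 1 t * u t t')) = 0" by (rule eq) auto
  have e8: "(\<Sum>t'<6. MK 4 t' * (\<Sum>t<6. MK 2 t * u t t')) = 0" by (rule eq) auto
  have e9: "(\<Sum>t'<6. MK 5 t' * (\<Sum>t<6. MK 2 t * u t t')) = 0" by (rule eq) auto
  have e10: "(\<Sum>t'<6. MK 4 t' * (\<Sum>t<6. MK 3 t * u t t')) = 0" by (rule eq) auto
  have e11: "(\<Sum>t'<6. MK 5 t' * (\<Sum>t<6. MK 3 t * u t t')) = 0" by (rule eq) auto
  have "20 * u 0 0 = (2+4*\<i>) * (\<Sum>t'<6. MK 2 t' * (\<Sum>t<6. MK 0 t * u t t')) + (2) * (\<Sum>t'<6. MK 3 t' * (\<Sum>t<6. MK 0 t * u t t')) + (-6+-4*\<i>) * (\<Sum>t'<6. MK 4 t' * (\<Sum>t<6. MK 0 t * u t t')) + (3+3*\<i>) * (\<Sum>t'<6. MK 5 t' * (\<Sum>t<6. MK 0 t * u t t')) + (1+-3*\<i>) * (\<Sum>t'<6. MK 2 t' * (\<Sum>t<6. MK 1 t * u t t')) + (-4*\<i>) * (\<Sum>t'<6. MK 3 t' * (\<Sum>t<6. MK 1 t * u t t')) + (-4+2*\<i>) * (\<Sum>t'<6. MK 4 t' * (\<Sum>t<6. MK 1 t * u t t')) + (-10) * (\<Sum>t'<6. MK 5 t' * (\<Sum>t<6. MK 1 t * u t t')) + (-6*\<i>) * (\<Sum>t'<6. MK 5 t' * (\<Sum>t<6.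 MK 2 t * u t t')) + (3+-1*\<i>) * (\<Sum>t'<6. MK 4 t' * (\<Sum>t<6. MK 3 t * u t t')) + (2+-4*\<i>) * (\<Sum>t'<6. MK 5 t' * (\<Sum>t<6. MK 3 t * u t t'))"
    by (simp only: sum6) (simp add: MK_vals s10 s20 s21 s43 s53 s54 z03 z30 z04 z40 z05 z50 z13 z31 z14 z41 z15 z51 z23 z32 z24 z42 z25 z52 complex_eq_iff algebra_simps)
  also have "\<dots> = 0" by (simp only: e0 e1 e2 e3 e4 e5 e6 e7 e8 e9 e10 e11 mult_zero_right add_0_right)
  finally have r00: "u 0 0 = 0" by simp
  have "10 * u 0 1 = (-1+-1*\<i>) * (\<Sum>t'<6. MK 2 t' * (\<Sum>t<6. MK 0 t * u t t')) + (-2) * (\<Sum>t'<6. MK 3 t' * (\<Sum>t<6. MK 0 t * u t t')) + (1+3*\<i>) * (\<Sum>t'<6. MK 4 t' * (\<Sum>t<6. MK 0 t * u t t')) + (-1+-2*\<i>) * (\<Sum>t'<6. MK 5 t' * (\<Sum>t<6. MK 0 t * u t t')) + (-1+2*\<i>) * (\<Sum>t'<6. MK 2 t' * (\<Sum>t<6. MK 1 t * u t t')) + (3+1*\<i>) * (\<Sum>t'<6. MK 5 t' * (\<Sum>t<6. MK 1 t * u t t')) + (2*\<i>) * (\<Sum>t'<6. MK 4 t' * (\<Sum>t<6. MK 2 t * u t t')) + (2*\<i>) * (\<Sum>t'<6. MK 5 t' * (\<Sum>t<6. MK 2 t * u t t')) + (-1+-2*\<i>) * (\<Sum>t'<6.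 MK 4 t' * (\<Sum>t<6. MK 3 t * u t t')) + (-1+-1*\<i>) * (\<Sum>t'<6. MK 5 t' * (\<Sum>t<6. MK 3 t * u t t'))"
    by (simp only: sum6) (simp add: MK_vals s10 s20 s21 s43 s53 s54 z03 z30 z04 z40 z05 z50 z13 z31 z14 z41 z15 z51 z23 z32 z24 z42 z25 z52 complex_eq_iff algebra_simps)
  also have "\<dots> = 0" by (simp only: e0 e1 e2 e3 e4 e5 e6 e7 e8 e9 e10 e11 mult_zero_right add_0_right)
  finally have r01: "u 0 1 = 0" by simp
  have "10 * u 0 2 = (-3+-1*\<i>) * (\<Sum>t'<6. MK 2 t' * (\<Sum>t<6. MK 0 t * u t t')) + (2) * (\<Sum>t'<6. MK 3 t' * (\<Sum>t<6. MK 0 t * u t t')) + (-1+1*\<i>) * (\<Sum>t'<6. MK 4 t' * (\<Sum>t<6. MK 0 t * u t t')) + (1+-2*\<i>) * (\<Sum>t'<6. MK 5 t' * (\<Sum>t<6. MK 0 t * u t t')) + (1+2*\<i>) * (\<Sum>t'<6. MK 2 t' * (\<Sum>t<6. MK 1 t * u t t')) + (2) * (\<Sum>t'<6. MK 4 t' * (\<Sum>t<6. MK 1 t * u t t')) + (1+-1*\<i>) * (\<Sum>t'<6. MK 5 t' * (\<Sum>t<6. MK 1 t * u t t')) + (1) * (\<Sum>t'<6. MK 4 t' * (\<Sum>t<6. MK 3 t * u t t')) + (1+-3*\<i>) * (\<Sum>t'<6. MK 5 t' * (\<Sum>t<6. MK 3 t * u t t'))"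
    by (simp only: sum6) (simp add: MK_vals s10 s20 s21 s43 s53 s54 z03 z30 z04 z40 z05 z50 z13 z31 z14 z41 z15 z51 z23 z32 z24 z42 z25 z52 complex_eq_iff algebra_simps)
  also have "\<dots> = 0" by (simp only: e0 e1 e2 e3 e4 e5 e6 e7 e8 e9 e10 e11 mult_zero_right add_0_right)
  finally have r02: "u 0 2 = 0" by simp
  show ?thesis using r00 r01 r02 by simp
qed

lemma dec_core:
  fixes x :: "nat \<Rightarrow> complex"
  assumes zero: "\<And>t. 3 \<le> t \<Longrightarrow> x t = 0" and b: "b < (3::nat)"
    and eq: "\<And>s. s < 6 \<Longrightarrow> s div 2 \<noteq> b \<Longrightarrow> (\<Sum>t<6. MK s t * x t) = 0"
  shows "x 0 = 0"
proof -
  have z: "x 3 = 0" "x 4 = 0" "x 5 = 0" by (rule zero; simp)+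
  consider "b = 0" | "b = 1" | "b = 2" using b by linarith
  then show ?thesis
  proof cases
    case 1
    have d2: "(\<Sum>t<6. MK 2 t * x t) = 0" using 1 by (intro eq) auto
    have d3: "(\<Sum>t<6. MK 3 t * x t) = 0" using 1 by (intro eq) auto
    have d4: "(\<Sum>t<6. MK 4 t * x t) = 0" using 1 by (intro eq) auto
    have "1 * x 0 = (- \<i>) * (\<Sum>t<6. MK 2 t * x t) + (- \<i>) * (\<Sum>t<6. MK 3 t * x t) + (1+-1*\<i>) * (\<Sum>t<6. MK 4 t * x t)"
      by (simp only: sum6) (simp add: MK_vals z complex_eq_iff algebra_simps)
    also have "\<dots> = 0" by (simp only: d2 d3 d4 mult_zero_right add_0_right)
    finally show ?thesis by simp
  next
    case 2
    have d0: "(\<Sum>t<6. MK 0 t * x t) = 0" using 2 by (intro eq) auto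
    have d1: "(\<Sum>t<6. MK 1 t * x t) = 0" using 2 by (intro eq) auto
    have d4: "(\<Sum>t<6. MK 4 t * x t) = 0" using 2 by (intro eq) auto
    have "5 * x 0 = (-1+2*\<i>) * (\<Sum>t<6. MK 0 t * x t) + (1+-2*\<i>) * (\<Sum>t<6. MK 1 t * x t) + (-2+-1*\<i>) * (\<Sum>t<6. MK 4 t * x t)"
      by (simp only: sum6) (simp add: MK_vals z complex_eq_iff algebra_simps)
    also have "\<dots> = 0" by (simp only: d0 d1 d4 mult_zero_right add_0_right)
    finally show ?thesis by simp
  next
    case 3
    have d0: "(\<Sum>t<6. MK 0 t * x t) = 0" using 3 by (intro eq) auto
    have d1: "(\<Sum>t<6. MK 1 t * x t) = 0" using 3 by (intro eq) auto
    have d2: "(\<Sum>t<6. MK 2 t * x t) = 0" using 3 by (intro eq) auto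
    have "5 * x 0 = (-1+3*\<i>) * (\<Sum>t<6. MK 0 t * x t) + (-1+-2*\<i>) * (\<Sum>t<6. MK 1 t * x t) + (-1+-2*\<i>) * (\<Sum>t<6. MK 2 t * x t)"
      by (simp only: sum6) (simp add: MK_vals z complex_eq_iff algebra_simps)
    also have "\<dots> = 0" by (simp only: d0 d1 d2 mult_zero_right add_0_right)
    finally show ?thesis by simp
  qed
qed

lemma MK_unit: assumes "s < 6" "s' < 6"
  shows "(\<Sum>t<6. MK s t * cnj (MK s' t)) = (if s = s' then 5 else 0)"
proof -
  have "s \<in> {0,1,2,3,4,5}" "s' \<in> {0,1,2,3,4,5}" using assms by auto
  thus ?thesis by (auto simp: MK_def eval_nat_numeral complex_eq_iff)
qed


definition rK :: "nat \<Rightarrow> nat \<Rightarrow> nat \<Rightarrow> nat" where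
  "rK n1 n2 t = (if t < 2 then t else if t < 4 then n1 + (t - 2) else n1 + n2 + (t - 4))"
definition cK :: "nat \<Rightarrow> nat \<Rightarrow> nat" where
  "cK p t = (if t < 3 then t else p + (t - 3))"
definition kap :: complex where "kap = complex_of_real (inverse (sqrt 5))"

definition Wm :: "nat \<Rightarrow> nat \<Rightarrow> nat \<Rightarrow> nat \<Rightarrow> (nat \<Rightarrow> nat) \<Rightarrow> complex mat" where
  "Wm n1 n2 p N f = mat N N (\<lambda>(i,j).
     if i \<in> rK n1 n2 ` {..<6} then
       (if j \<in> cK p ` {..<6} then kap * MK (the_inv_into {..<6} (rK n1 n2) i) (the_inv_into {..<6} (cK p) j) else 0)
     else (if j = f i then 1 else 0))"

lemma kap_nz: "kap \<noteq> 0" unfolding kap_def by simp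
lemma kap_sq: "kap * cnj kap = 1/5"
proof -
  have "kap * cnj kap = complex_of_real (inverse (sqrt 5) * inverse (sqrt 5))" unfolding kap_def by simp
  also have "inverse (sqrt 5) * inverse (sqrt 5) = inverse (5::real)"
    by (simp add: inverse_mult_distrib[symmetric])
  also have "complex_of_real (inverse 5) = 1/5" by (simp add: inverse_eq_divide)
  finally show ?thesis .
qed

locale setting =
  fixes n1 n2 n3 p q N :: nat and f :: "nat \<Rightarrow> nat"
  assumes N1: "N = n1 + n2 + n3" and N2: "N = p + q"
    and pq: "p \<ge> 3" "q \<ge> 3" and nn: "n1 \<ge> 2" "n2 \<ge> 2" "n3 \<ge> 2"
    and fb: "bij_betw f ({..<N} - rK n1 n2 ` {..<6}) ({..<N} - cK p ` {..<6})"
begin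

abbreviation "KR \<equiv> rK n1 n2 ` {..<6}"
abbreviation "KC \<equiv> cK p ` {..<6}"
abbreviation "W \<equiv> Wm n1 n2 p N f"

lemma rK_lt: "t < 6 \<Longrightarrow> rK n1 n2 t < N" using N1 nn unfolding rK_def by auto
lemma cK_lt: "t < 6 \<Longrightarrow> cK p t < N" using N2 pq unfolding cK_def by auto
lemma rK_inj: "inj_on (rK n1 n2) {..<6}" using nn unfolding inj_on_def rK_def by auto
lemma cK_inj: "inj_on (cK p) {..<6}" using pq unfolding inj_on_def cK_def by auto
lemma rK_lab: "t < 6 \<Longrightarrow> lab3 n1 n2 (rK n1 n2 t) = t div 2"
  using nn unfolding rK_def lab3_def by auto
lemma cK_lab: "t < 6 \<Longrightarrow> lab2 p (cK p t) = (if t < 3 then 0 else 1)"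
  using pq unfolding cK_def lab2_def by auto
lemma cK_small: "t < 3 \<Longrightarrow> cK p t = t" unfolding cK_def by auto

lemma W_carrier: "W \<in> carrier_mat N N" unfolding Wm_def by auto

lemma W_KK: "s < 6 \<Longrightarrow> t < 6 \<Longrightarrow> W $$ (rK n1 n2 s, cK p t) = kap * MK s t"
  unfolding Wm_def using rK_lt cK_lt the_inv_into_f_f[OF rK_inj] the_inv_into_f_f[OF cK_inj] by auto

lemma W_Kout: "s < 6 \<Longrightarrow> j < N \<Longrightarrow> j \<notin> KC \<Longrightarrow> W $$ (rK n1 n2 s, j) = 0"
  unfolding Wm_def using rK_lt by auto

lemma W_out: "i < N \<Longrightarrow> i \<notin> KR \<Longrightarrow> j < N \<Longrightarrow> W $$ (i, j) = (if j = f i then 1 else 0)"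
  unfolding Wm_def by auto

lemma f_in: "i < N \<Longrightarrow> i \<notin> KR \<Longrightarrow> f i < N \<and> f i \<notin> KC"
  using fb unfolding bij_betw_def by auto

lemma sumK: assumes "s < 6"
  shows "(\<Sum>j<N. W $$ (rK n1 n2 s, j) * g j) = kap * (\<Sum>t<6. MK s t * g (cK p t))"
proof -
  have sub: "KC \<subseteq> {..<N}" using cK_lt by auto
  have "(\<Sum>j<N. W $$ (rK n1 n2 s, j) * g j) = (\<Sum>j\<in>KC. W $$ (rK n1 n2 s, j) * g j)"
    by (rule sum.mono_neutral_right) (use sub W_Kout[OF assms] in auto)
  also have "\<dots> = (\<Sum>t<6. W $$ (rK n1 n2 s, cK p t) * g (cK p t))"
    by (rule sum.reindex[OF cK_inj, unfolded comp_def])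
  also have "\<dots> = (\<Sum>t<6. kap * (MK s t * g (cK p t)))"
    by (rule sum.cong) (use W_KK[OF assms] in auto)
  also have "\<dots> = kap * (\<Sum>t<6. MK s t * g (cK p t))" by (simp add: sum_distrib_left)
  finally show ?thesis .
qed

lemma sumO: assumes "i < N" "i \<notin> KR"
  shows "(\<Sum>j<N. W $$ (i, j) * g j) = g (f i)"
proof -
  have "(\<Sum>j<N. W $$ (i, j) * g j) = (\<Sum>j<N. (if j = f i then g j else 0))"
    by (rule sum.cong) (use W_out[OF assms] in auto)
  also have "\<dots> = g (f i)" using f_in[OF assms] by simp
  finally show ?thesis .
qed

lemma W_unitary: "W \<in> unitary_group N"
proof -
  have Wc: "W \<in> carrier_mat N N" by (rule W_carrier)
  have "W * mat_adjoint W = 1\<^sub>m N"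
  proof (rule eq_matI)
    fix i i' assume "i < dim_row (1\<^sub>m N)" "i' < dim_col (1\<^sub>m N)"
    hence i: "i < N" and i': "i' < N" by auto
    have "(W * mat_adjoint W) $$ (i,i') = (\<Sum>j<N. W $$ (i,j) * cnj (W $$ (i',j)))"
      using Wc i i' by (subst mi[of _ N N _ N]) auto
    also have "\<dots> = (if i = i' then 1 else 0)"
    proof (cases "i \<in> KR")
      case True
      then obtain s where s: "s < 6" "i = rK n1 n2 s" by auto
      have "(\<Sum>j<N. W $$ (i,j) * cnj (W $$ (i',j))) = kap * (\<Sum>t<6. MK s t * cnj (W $$ (i', cK p t)))"
        unfolding s(2) by (rule sumK[OF s(1)])
      also have "\<dots> = (if i = i' then 1 else 0)"
      proof (cases "i' \<in> KR")
        case True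
        then obtain s' where s': "s' < 6" "i' = rK n1 n2 s'" by auto
        have "kap * (\<Sum>t<6. MK s t * cnj (W $$ (i', cK p t))) = kap * (\<Sum>t<6. cnj kap * (MK s t * cnj (MK s' t)))"
          unfolding s'(2) by (intro arg_cong[where f="\<lambda>x. kap * x"] sum.cong) (use W_KK[OF s'(1)] in auto)
        also have "\<dots> = (kap * cnj kap) * (\<Sum>t<6. MK s t * cnj (MK s' t))"
          by (simp add: sum_distrib_left mult.assoc)
        also have "\<dots> = (if s = s' then 1 else 0)" unfolding kap_sq MK_unit[OF s(1) s'(1)] by simp
        also have "\<dots> = (if i = i' then 1 else 0)"
          using s s' inj_onD[OF rK_inj, of s s'] by auto
        finally show ?thesis .
      next
        case False
        have ne: "cK p t \<noteq> f i'" if "t < 6" for t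
          using f_in[OF i' False] that by (metis lessThan_iff rev_image_eqI)
        have "\<And>t. t < 6 \<Longrightarrow> W $$ (i', cK p t) = 0"
          using W_out[OF i' False cK_lt] ne by auto
        thus ?thesis using False s by auto
      qed
      finally show ?thesis .
    next
      case False
      have "(\<Sum>j<N. W $$ (i,j) * cnj (W $$ (i',j))) = cnj (W $$ (i', f i))"
        by (rule sumO[OF i False])
      also have "\<dots> = (if i = i' then 1 else 0)"
      proof (cases "i' \<in> KR")
        case True
        then obtain s' where s': "s' < 6" "i' = rK n1 n2 s'" by auto
        show ?thesis using W_Kout[OF s'(1)] f_in[OF i False] s' False by auto
      next
        case F2: False
        have "f i = f i' \<longleftrightarrow> i = i'"
          using fb i i' False F2 unfolding bij_betw_def inj_on_def by auto
        thus ?thesis using W_out[OF i' F2] f_in[OF i False] by auto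
      qed
      finally show ?thesis .
    qed
    also have "\<dots> = 1\<^sub>m N $$ (i,i')" using i i' by simp
    finally show "(W * mat_adjoint W) $$ (i,i') = 1\<^sub>m N $$ (i,i')" .
  qed (use Wc in auto)
  thus ?thesis using Wc unfolding unitary_group_def by auto
qed

end

context setting
begin

lemma core:
  fixes S :: "complex mat"
  assumes sym: "\<And>k l. k < N \<Longrightarrow> l < N \<Longrightarrow> S $$ (k,l) = S $$ (l,k)"
    and bz: "\<And>k l. k < N \<Longrightarrow> l < N \<Longrightarrow> lab2 p k \<noteq> lab2 p l \<Longrightarrow> S $$ (k,l) = 0"
    and hyp: "\<And>i j. i < N \<Longrightarrow> j < N \<Longrightarrow> lab3 n1 n2 i \<noteq> lab3 n1 n2 j \<Longrightarrow>
       (\<Sum>l<N. (\<Sum>k<N. W $$ (i,k) * S $$ (k,l)) * W $$ (j,l)) = 0"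
    and l: "l < N"
  shows "S $$ (0,l) = 0"
proof -
  define G where "G i l = (\<Sum>k<N. W $$ (i,k) * S $$ (k,l))" for i l
  have G_K: "G (rK n1 n2 s) l = kap * (\<Sum>t<6. MK s t * S $$ (cK p t, l))" if "s < 6" for s l
    unfolding G_def by (rule sumK[OF that])
  have hyp': "(\<Sum>l<N. W $$ (j,l) * G i l) = 0" if "i < N" "j < N" "lab3 n1 n2 i \<noteq> lab3 n1 n2 j" for i j
    using hyp[OF that] unfolding G_def by (simp add: mult.commute)
  define u where "u t t' = (if t < 6 \<and> t' < 6 then S $$ (cK p t, cK p t') else 0)" for t t'
  have eqs: "(\<Sum>t'<6. MK s' t' * (\<Sum>t<6. MK s t * u t t')) = 0"
    if s: "s < 6" "s' < 6" "s div 2 \<noteq> s' div 2" for s s'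
  proof -
    have "0 = (\<Sum>l<N. W $$ (rK n1 n2 s', l) * G (rK n1 n2 s) l)"
      using hyp'[of "rK n1 n2 s" "rK n1 n2 s'"] rK_lt[OF s(1)] rK_lt[OF s(2)] rK_lab[OF s(1)] rK_lab[OF s(2)] s(3)
      by simp
    also have "\<dots> = kap * (\<Sum>t'<6. MK s' t' * G (rK n1 n2 s) (cK p t'))" by (rule sumK[OF s(2)])
    also have "\<dots> = kap * (\<Sum>t'<6. MK s' t' * (kap * (\<Sum>t<6. MK s t * u t t')))"
      using G_K[OF s(1)] by (auto simp: u_def intro!: sum.cong arg_cong[where f="\<lambda>x. kap * x"])
    also have "\<dots> = kap * kap * (\<Sum>t'<6. MK s' t' * (\<Sum>t<6. MK s t * u t t'))"
      by (simp add: sum_distrib_left mult.assoc mult.left_commute)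
    finally show ?thesis using kap_nz by simp
  qed
  have loc: "u 0 0 = 0 \<and> u 0 1 = 0 \<and> u 0 2 = 0"
  proof (rule local_core)
    show "u t t' = u t' t" for t t' using sym cK_lt by (auto simp: u_def)
    show "u t t' = 0" if "t < 3" "3 \<le> t'" for t t'
      using that bz[of "cK p t" "cK p t'"] cK_lt cK_lab[of t] cK_lab[of t'] by (auto simp: u_def)
    show "(\<Sum>t'<6. MK s' t' * (\<Sum>t<6. MK s t * u t t')) = 0"
      if "s < 6" "s' < 6" "s div 2 \<noteq> s' div 2" for s s' by (rule eqs[OF that])
  qed
  have lab0: "lab2 p 0 = 0" using pq unfolding lab2_def by auto
  show ?thesis
  proof (cases "l \<in> KC")
    case True
    then obtain t where t: "t < 6" "l = cK p t" by auto
    show ?thesis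
    proof (cases "t < 3")
      case True
      then have "t = 0 \<or> t = 1 \<or> t = 2" by auto
      then show ?thesis using loc t cK_small unfolding u_def by auto
    next
      case False
      show ?thesis using bz[of 0 l] l t cK_lab[of t] False lab0 by auto
    qed
  next
    case False
    show ?thesis
    proof (cases "lab2 p l = 0")
      case False2: False
      show ?thesis using bz[of 0 l] l lab0 False2 by auto
    next
      case True
      have "l \<in> f ` ({..<N} - KR)" using fb l False unfolding bij_betw_def by auto
      then obtain r where r: "r < N" "r \<notin> KR" "f r = l" by auto
      define x where "x t = (if t < 3 then S $$ (cK p t, l) else 0)" for t
      have "x 0 = 0"
      proof (rule dec_core[of x "lab3 n1 n2 r"])
        show "x t = 0" if "3 \<le> t" for t using that by (simp add: x_def)
        show "lab3 n1 n2 r < 3" by (simp add: lab3_def)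
        fix s assume s: "s < 6" "s div 2 \<noteq> lab3 n1 n2 r"
        have xs: "(\<Sum>t<6. MK s t * S $$ (cK p t, l)) = (\<Sum>t<6. MK s t * x t)"
          by (rule sum.cong) (use bz cK_lt cK_lab True l in \<open>auto simp: x_def\<close>)
        have "0 = (\<Sum>l'<N. W $$ (r,l') * G (rK n1 n2 s) l')"
          using hyp'[of "rK n1 n2 s" r] rK_lt[OF s(1)] r rK_lab[OF s(1)] s by simp
        also have "\<dots> = G (rK n1 n2 s) l" using sumO[OF r(1) r(2)] r(3) by simp
        also have "\<dots> = kap * (\<Sum>t<6. MK s t * x t)" using G_K[OF s(1)] xs by simp
        finally show "(\<Sum>t<6. MK s t * x t) = 0" using kap_nz by simp
      qed
      thus ?thesis using cK_small[of 0] by (simp add: x_def)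
    qed
  qed
qed

end

theorem proposition6p5:
  fixes n1 n2 n3 p q :: nat
  assumes "n1 + n2 + n3 = p + q"
    and "min p q \<ge> 3"
    and "min n1 (min n2 n3) \<ge> 2"
  shows "{X * Y * Z | X Y Z. X \<in> block_U3 n1 n2 n3 \<and> Y \<in> orthogonal_group_in_U (p + q)
            \<and> Z \<in> block_U2 p q} \<subset> unitary_group (p + q)"
proof -
  define N where "N = p + q"
  have nn: "n1 \<ge> 2" "n2 \<ge> 2" "n3 \<ge> 2" and pq: "p \<ge> 3" "q \<ge> 3" using assms(2,3) by auto
  let ?S = "{X * Y * Z | X Y Z. X \<in> block_U3 n1 n2 n3 \<and> Y \<in> orthogonal_group_in_U (p + q)
            \<and> Z \<in> block_U2 p q}"
  have sub: "?S \<subseteq> unitary_group (p+q)"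
  proof
    fix W assume "W \<in> ?S"
    then obtain X Y Z where W: "W = X*Y*Z" "X \<in> block_U3 n1 n2 n3" "Y \<in> orthogonal_group_in_U (p+q)"
      "Z \<in> block_U2 p q" by auto
    have "X \<in> unitary_group (p+q)" using bu3_unitary[OF W(2)] assms(1) by simp
    then show "W \<in> unitary_group (p+q)"
      using W unitary_mult orth_unitary bu2_unitary by metis
  qed
  have rKi: "inj_on (rK n1 n2) {..<6}" using nn unfolding inj_on_def rK_def by auto
  have cKi: "inj_on (cK p) {..<6}" using pq unfolding inj_on_def cK_def by auto
  have rKs: "rK n1 n2 ` {..<6} \<subseteq> {..<N}" using nn assms(1) unfolding rK_def N_def by auto
  have cKs: "cK p ` {..<6} \<subseteq> {..<N}" using pq unfolding cK_def N_def by auto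
  have "card ({..<N} - rK n1 n2 ` {..<6}) = N - 6"
    using card_Diff_subset[OF _ rKs] card_image[OF rKi] by simp
  moreover have "card ({..<N} - cK p ` {..<6}) = N - 6"
    using card_Diff_subset[OF _ cKs] card_image[OF cKi] by simp
  ultimately obtain f where fb: "bij_betw f ({..<N} - rK n1 n2 ` {..<6}) ({..<N} - cK p ` {..<6})"
    using finite_same_card_bij[of "{..<N} - rK n1 n2 ` {..<6}" "{..<N} - cK p ` {..<6}"] by auto
  interpret setting n1 n2 n3 p q N f
    using assms(1) nn pq fb unfolding N_def by unfold_locales auto
  have Npos: "0 < N" using pq N_def by simp
  have WnS: "W \<notin> ?S"
  proof
    assume "W \<in> ?S"
    then obtain X Y Z where WXYZ: "W = X*Y*Z" and X: "X \<in> block_U3 n1 n2 n3" and Y: "Y \<in> orthogonal_group_in_U (p+q)"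
      and Z: "Z \<in> block_U2 p q" by auto
    have XU: "X \<in> unitary_group N" using bu3_unitary[OF X] assms(1) N_def by simp
    have Xc: "X \<in> carrier_mat N N" using XU unfolding unitary_group_def by auto
    obtain Q where Q: "Y = map_mat complex_of_real Q" "Q \<in> carrier_mat N N" "Q * transpose_mat Q = 1\<^sub>m N"
      using Y unfolding orthogonal_group_in_U_def N_def by auto
    have Yc: "Y \<in> carrier_mat N N" using Q by auto
    have YT: "transpose_mat Y = map_mat complex_of_real (transpose_mat Q)"
      unfolding Q(1) by (rule eq_matI) auto
    have YYt: "Y * transpose_mat Y = 1\<^sub>m N"
    proof -
      have "Y * transpose_mat Y = map_mat complex_of_real Q * map_mat complex_of_real (transpose_mat Q)"
        unfolding YT unfolding Q(1) ..
      also have "\<dots> = map_mat complex_of_real (Q * transpose_mat Q)"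
        by (rule of_real_hom.mat_hom_mult[symmetric]) (use Q(2) in auto)
      also have "\<dots> = 1\<^sub>m N" using Q(3) of_real_hom.mat_hom_one by simp
      finally show ?thesis .
    qed
    have ZU: "Z \<in> unitary_group N" using bu2_unitary[OF Z] N_def by simp
    have Zc: "Z \<in> carrier_mat N N" and Zu: "Z * mat_adjoint Z = 1\<^sub>m N" using ZU unfolding unitary_group_def by auto
    have Zac: "mat_adjoint Z \<in> carrier_mat N N" using Zc by simp
    have Zu': "mat_adjoint Z * Z = 1\<^sub>m N" by (rule mat_mult_left_right_inverse[OF Zc Zac Zu])
    have Wc: "W \<in> carrier_mat N N" by (rule W_carrier)
    define S where "S = mat_adjoint Z * transpose_mat (mat_adjoint Z)"
    have Sc: "S \<in> carrier_mat N N" unfolding S_def using Zac by simp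
    have hM: "W * mat_adjoint Z = X * Y"
    proof -
      have "W * mat_adjoint Z = (X * Y) * (Z * mat_adjoint Z)"
        unfolding WXYZ using Xc Yc Zc Zac by (subst assoc_mult_mat[of _ N N _ N _ N]) auto
      also have "\<dots> = X * Y" using Xc Yc Zu by simp
      finally show ?thesis .
    qed
    have hMM: "(X * Y) * transpose_mat (X * Y) = X * transpose_mat X"
    proof -
      have "(X * Y) * transpose_mat (X * Y) = (X * Y) * (transpose_mat Y * transpose_mat X)"
        using transpose_mult[OF Xc Yc] by simp
      also have "\<dots> = X * ((Y * transpose_mat Y) * transpose_mat X)"
        using Xc Yc by (simp add: assoc_mult_mat[of _ N N _ N _ N])
      also have "\<dots> = X * transpose_mat X" using YYt Xc by simp
      finally show ?thesis .
    qed
    have hMM2: "(W * mat_adjoint Z) * transpose_mat (W * mat_adjoint Z) = W * S * transpose_mat W"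
    proof -
      have "(W * mat_adjoint Z) * transpose_mat (W * mat_adjoint Z) = (W * mat_adjoint Z) * (transpose_mat (mat_adjoint Z) * transpose_mat W)"
        using transpose_mult[OF Wc Zac] by simp
      also have "\<dots> = W * S * transpose_mat W"
        unfolding S_def using Wc Zac by (simp add: assoc_mult_mat[of _ N N _ N _ N])
      finally show ?thesis .
    qed
    have WSW: "W * S * transpose_mat W = X * transpose_mat X" using hM hMM hMM2 by simp
    have Sidx: "S $$ (k,l) = (\<Sum>m<N. cnj (Z $$ (m,k)) * cnj (Z $$ (m,l)))" if "k < N" "l < N" for k l
      unfolding S_def using that Zc Zac by (subst mi[of _ N N _ N]) (auto intro!: sum.cong)
    have Ssym: "S $$ (k,l) = S $$ (l,k)" if "k < N" "l < N" for k l
      using Sidx[OF that] Sidx[OF that(2,1)] by (simp add: mult.commute)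
    have Sbz: "S $$ (k,l) = 0" if kl: "k < N" "l < N" "lab2 p k \<noteq> lab2 p l" for k l
    proof -
      have zt: "\<And>m. m < N \<Longrightarrow> cnj (Z $$ (m,k)) * cnj (Z $$ (m,l)) = 0"
      proof -
        fix m assume m: "m < N"
        show "cnj (Z $$ (m,k)) * cnj (Z $$ (m,l)) = 0"
        proof (cases "lab2 p m = lab2 p k")
          case True
          then show ?thesis using bu2_zero[OF Z, of m l] m kl N_def by simp
        next
          case False
          then show ?thesis using bu2_zero[OF Z, of m k] m kl N_def by simp
        qed
      qed
      have "(\<Sum>m<N. cnj (Z $$ (m,k)) * cnj (Z $$ (m,l))) = 0"
        by (rule sum.neutral) (use zt in auto)
      thus ?thesis using Sidx[OF kl(1,2)] by simp
    qed
    have hyp: "(\<Sum>l<N. (\<Sum>k<N. W $$ (i,k) * S $$ (k,l)) * W $$ (j,l)) = 0"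
      if ij: "i < N" "j < N" "lab3 n1 n2 i \<noteq> lab3 n1 n2 j" for i j
    proof -
      have WSc: "W * S \<in> carrier_mat N N" using Wc Sc by simp
      have WTc: "transpose_mat W \<in> carrier_mat N N" using Wc by simp
      have "(W * S * transpose_mat W) $$ (i,j) = (\<Sum>l<N. (W * S) $$ (i,l) * transpose_mat W $$ (l,j))"
        by (rule mi[OF WSc WTc ij(1,2)])
      also have "\<dots> = (\<Sum>l<N. (\<Sum>k<N. W $$ (i,k) * S $$ (k,l)) * W $$ (j,l))"
      proof (rule sum.cong)
        fix l assume "l \<in> {..<N}"
        hence l: "l < N" by simp
        show "(W * S) $$ (i,l) * transpose_mat W $$ (l,j) = (\<Sum>k<N. W $$ (i,k) * S $$ (k,l)) * W $$ (j,l)"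
          using mi[OF Wc Sc ij(1) l] l ij Wc by simp
      qed simp
      finally have "(\<Sum>l<N. (\<Sum>k<N. W $$ (i,k) * S $$ (k,l)) * W $$ (j,l)) = (W * S * transpose_mat W) $$ (i,j)" by simp
      also have "\<dots> = (X * transpose_mat X) $$ (i,j)" using WSW by simp
      also have "\<dots> = (\<Sum>k<N. X $$ (i,k) * X $$ (j,k))"
        using Xc ij by (subst mi[of _ N N _ N]) auto
      also have "\<dots> = 0"
      proof (rule sum.neutral, rule ballI)
        fix k assume "k \<in> {..<N}"
        hence k: "k < N" by simp
        show "X $$ (i,k) * X $$ (j,k) = 0"
        proof (cases "lab3 n1 n2 k = lab3 n1 n2 i")
          case True
          then show ?thesis using bu3_zero[OF X, of j k] k ij N1 by simp
        next
          case False
          then show ?thesis using bu3_zero[OF X, of i k] k ij N1 by simp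
        qed
      qed
      finally show ?thesis .
    qed
    have S0: "S $$ (0,l) = 0" if "l < N" for l
      by (rule core[OF Ssym Sbz hyp that]) auto
    have SZ: "S * transpose_mat Z = mat_adjoint Z"
    proof -
      have "S * transpose_mat Z = mat_adjoint Z * (transpose_mat (mat_adjoint Z) * transpose_mat Z)"
        unfolding S_def using Zac Zc by (simp add: assoc_mult_mat[of _ N N _ N _ N])
      also have "transpose_mat (mat_adjoint Z) * transpose_mat Z = transpose_mat (Z * mat_adjoint Z)"
        using transpose_mult[OF Zc Zac] by simp
      also have "\<dots> = 1\<^sub>m N" using Zu by simp
      finally show ?thesis using right_mult_one_mat[OF Zac] by simp
    qed
    have A0: "mat_adjoint Z $$ (0,j) = 0" if "j < N" for j
    proof -
      have "mat_adjoint Z $$ (0,j) = (S * transpose_mat Z) $$ (0,j)" using SZ by simp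
      also have "\<dots> = (\<Sum>l<N. S $$ (0,l) * Z $$ (j,l))"
        using Sc Zc that Npos by (subst mi[of _ N N _ N]) auto
      also have "\<dots> = 0" using S0 by simp
      finally show ?thesis .
    qed
    have "(mat_adjoint Z * Z) $$ (0,0) = (\<Sum>j<N. mat_adjoint Z $$ (0,j) * Z $$ (j,0))"
      using Zac Zc Npos by (subst mi[of _ N N _ N]) auto
    also have "\<dots> = 0" using A0 by simp
    finally have "(mat_adjoint Z * Z) $$ (0,0) = 0" .
    moreover have "(mat_adjoint Z * Z) $$ (0,0) = 1" using Zu' Npos by simp
    ultimately show False by simp
  qed
  have WU: "W \<in> unitary_group (p+q)" using W_unitary N_def by simp
  show ?thesis using sub WU WnS by blast
qed

end
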